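(* Let $d\ge 0$, $e=2^d$, and let $\nu$ be a suitable tuple. For every even $n$ with $0\le n\le 2^e-2$, the vectors $M_d^\nu w_n$ and $M_d^\nu w_{n+1}$ are complementary, i.e. $M_d^\nu w_{n+1}=M_d^\nu w_n+\mathbf 1$, where $\mathbf 1$ is the all-ones vector.
   Context: Over $\mathbb{F}_2$, $M_0=(1)$ and $M_{d+1}=\begin{pmatrix} M_d & M_d\\ 0 & M_d\end{pmatrix}$, so $M_d$ is $e\times e$ with $e=2^d$. $w_0,\dots,w_{2^e-1}$ are all vectors of $\mathbb{F}_2^e$ in increasing lexicographic order. $\sigma(a_1\cdots a_n)=a_na_1\cdots a_{n-1}$. A tuple $\nu=(n_1,\dots,n_e)$ of non-negative integers is suitable if $n_e=0$ and $n_{i+1}\le n_i\le n_{i+1}+1$ for $1\le i\le e-1$. If $C_1,\dots,C_e$ are the columns of $M_d$, then $M_d^\nu=(\sigma^{n_1}(C_1),\dots,\sigma^{n_e}(C_e))$. *)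

theory Defs
  imports "Jordan_Normal_Form.Matrix" "HOL-Library.Z2"
begin

text \<open>Matrices and vectors over F_2 (type bit), 0-indexed.\<close>

fun Mmat :: "nat \<Rightarrow> bit mat" where
  "Mmat 0 = mat 1 1 (\<lambda>_. 1)"
| "Mmat (Suc d) = four_block_mat (Mmat d) (Mmat d) (0\<^sub>m (2^d) (2^d)) (Mmat d)"

definition sigma :: "'a vec \<Rightarrow> 'a vec" where
  "sigma v = vec (dim_vec v) (\<lambda>i. v $ ((i + dim_vec v - 1) mod dim_vec v))"

text \<open>w n: the n-th vector of F_2^e in increasing lexicographic order,
  i.e. the binary expansion of n with the first coordinate most significant.\<close>
definition wvec :: "nat \<Rightarrow> nat \<Rightarrow> bit vec" where
  "wvec e n = vec e (\<lambda>i. of_nat ((n div 2 ^ (e - 1 - i)) mod 2))"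

text \<open>suitable tuple nu = (n_1,...,n_e), stored as a list (0-indexed)\<close>
definition suitable :: "nat \<Rightarrow> nat list \<Rightarrow> bool" where
  "suitable e nu \<longleftrightarrow> length nu = e \<and> e \<ge> 1 \<and> nu ! (e - 1) = 0 \<and>
     (\<forall>i. i + 1 < e \<longrightarrow> nu ! (i + 1) \<le> nu ! i \<and> nu ! i \<le> nu ! (i + 1) + 1)"

definition Mnu :: "nat \<Rightarrow> nat list \<Rightarrow> bit mat" where
  "Mnu d nu = mat (2^d) (2^d) (\<lambda>(i, j). ((sigma ^^ (nu ! j)) (col (Mmat d) j)) $ i)"

end

theory Submission
  imports Defs
begin

lemma Mmat_carrier: "Mmat d \<in> carrier_mat (2^d) (2^d)"
  by (induction d) auto

lemma Mmat_last: "i < 2^d \<Longrightarrow> Mmat d $$ (i, 2^d - 1) = 1"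
proof (induction d arbitrary: i)
  case 0 then show ?case by simp
next
  case (Suc d)
  have c: "Mmat d \<in> carrier_mat (2^d) (2^d)" by (rule Mmat_carrier)
  have p: "(0::nat) < 2^d" by simp
  show ?case
  proof (cases "i < 2^d")
    case True
    have "2 * 2^d - Suc 0 - 2^d = 2^d - Suc 0" "\<not> 2 * 2^d - Suc 0 < (2::nat)^d" using p by auto
    then show ?thesis using c Suc True p
      by (simp add: four_block_mat_def Let_def)
  next
    case False
    have "2 * 2^d - Suc 0 - 2^d = 2^d - Suc 0" "\<not> 2 * 2^d - Suc 0 < (2::nat)^d" using p by auto
    moreover have "i - 2^d < 2^d" using Suc.prems by simp
    ultimately show ?thesis using c Suc False p
      by (simp add: four_block_mat_def Let_def)
  qed
qed

lemma div_even: "even (n::nat) \<Longrightarrow> k \<ge> 1 \<Longrightarrow> (n+1) div 2^k = n div 2^k"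
proof -
  assume e: "even n" and k: "k \<ge> 1"
  obtain m where m: "k = Suc m" using k by (cases k) auto
  have "(n+1) div 2 = n div 2" using e by auto
  then show ?thesis unfolding m
    by (metis div_mult2_eq mult.commute power_Suc)
qed

theorem lemma4:
  fixes d n :: nat and nu :: "nat list"
  assumes "suitable (2^d) nu"
    and "even n" and "n \<le> 2 ^ (2 ^ d) - 2"
  shows "Mnu d nu *\<^sub>v wvec (2^d) (n + 1) = Mnu d nu *\<^sub>v wvec (2^d) n + vec (2^d) (\<lambda>_. 1)"
proof -
  define e where "e = (2::nat)^d"
  have epos: "e > 0" unfolding e_def by simp
  then obtain m where em: "e = Suc m" by (cases e) auto
  have nu0: "nu ! m = 0" using assms(1) unfolding suitable_def e_def[symmetric] em by simp
  have Mlast: "Mnu d nu $$ (i, m) = 1" if "i < e" for i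
  proof -
    have c: "Mmat d \<in> carrier_mat e e" using Mmat_carrier e_def by simp
    have "Mnu d nu $$ (i, m) = col (Mmat d) m $ i"
      unfolding Mnu_def using that nu0 em e_def[symmetric] by simp
    also have "\<dots> = Mmat d $$ (i, e - 1)" using c that em by simp
    also have "\<dots> = 1" using Mmat_last that e_def by simp
    finally show ?thesis .
  qed
  have wlast: "wvec e (n+1) $ m = wvec e n $ m + 1"
  proof -
    have "Suc n mod 2 = 1" "n mod 2 = 0" using assms(2) by auto
    then show ?thesis unfolding wvec_def using em by simp
  qed
  have wother: "wvec e (n+1) $ j = wvec e n $ j" if "j < m" for j
  proof -
    have "e - 1 - j \<ge> 1" using that em by simp
    then show ?thesis unfolding wvec_def using that em div_even[OF assms(2)] by simp
  qed
  have dM: "dim_col (Mnu d nu) = e" "dim_row (Mnu d nu) = e"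
    unfolding Mnu_def e_def by simp_all
  have "Mnu d nu *\<^sub>v wvec e (n + 1) = Mnu d nu *\<^sub>v wvec e n + vec e (\<lambda>_. 1)"
  proof (rule eq_vecI)
    fix i assume i: "i < dim_vec (Mnu d nu *\<^sub>v wvec e n + vec e (\<lambda>_. 1))"
    hence ie: "i < e" by (simp add: dM)
    have "(Mnu d nu *\<^sub>v wvec e (n + 1)) $ i = (\<Sum>j<e. Mnu d nu $$ (i,j) * wvec e (n+1) $ j)"
    proof -
      have "(Mnu d nu *\<^sub>v wvec e (n + 1)) $ i = row (Mnu d nu) i \<bullet> wvec e (n+1)"
        using ie dM by simp
      also have "\<dots> = (\<Sum>j\<in>{0..<e}. row (Mnu d nu) i $ j * wvec e (n+1) $ j)"
        unfolding scalar_prod_def by (simp add: wvec_def)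
      also have "\<dots> = (\<Sum>j<e. Mnu d nu $$ (i,j) * wvec e (n+1) $ j)"
        unfolding lessThan_atLeast0 by (rule sum.cong) (use ie dM in auto)
      finally show ?thesis .
    qed
    also have "\<dots> = (\<Sum>j<m. Mnu d nu $$ (i,j) * wvec e (n+1) $ j) + Mnu d nu $$ (i,m) * wvec e (n+1) $ m"
      unfolding em by simp
    also have "\<dots> = (\<Sum>j<m. Mnu d nu $$ (i,j) * wvec e n $ j) + (Mnu d nu $$ (i,m) * wvec e n $ m + 1)"
      using wother wlast Mlast[OF ie] by (simp add: distrib_left)
    also have "\<dots> = (\<Sum>j<e. Mnu d nu $$ (i,j) * wvec e n $ j) + 1"
      unfolding em by (simp add: add.assoc)
    also have "\<dots> = (Mnu d nu *\<^sub>v wvec e n + vec e (\<lambda>_. 1)) $ i"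
    proof -
      have "(Mnu d nu *\<^sub>v wvec e n) $ i = row (Mnu d nu) i \<bullet> wvec e n"
        using ie dM by simp
      also have "\<dots> = (\<Sum>j\<in>{0..<e}. row (Mnu d nu) i $ j * wvec e n $ j)"
        unfolding scalar_prod_def by (simp add: wvec_def)
      also have "\<dots> = (\<Sum>j<e. Mnu d nu $$ (i,j) * wvec e n $ j)"
        unfolding lessThan_atLeast0 by (rule sum.cong) (use ie dM in auto)
      finally show ?thesis using ie dM by simp
    qed
    finally show "(Mnu d nu *\<^sub>v wvec e (n + 1)) $ i = (Mnu d nu *\<^sub>v wvec e n + vec e (\<lambda>_. 1)) $ i" .
  next
    show "dim_vec (Mnu d nu *\<^sub>v wvec e (n + 1)) = dim_vec (Mnu d nu *\<^sub>v wvec e n + vec e (\<lambda>_. 1))"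
      by (simp add: dM)
  qed
  then show ?thesis unfolding e_def .
qed

end
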